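(* Let $L$ be a library, $\Lambda$ a set of pairwise compatible libraries with $L\notin\Lambda$, and $I$ an implementation of $L$ that is well defined for $L$ using $\Lambda$. Let $\vec{p}=\langle p_1,\dots,p_T\rangle$ be a concurrent program all of whose method calls are to methods of libraries in $\Lambda\uplus\{L\}$. If $(\vec v,G)\in[\![\langle\!\langle \vec p\rangle\!\rangle_I]\!]$, then there exist a plain execution $G'$ and a function $f$ such that $(\vec v,G')\in[\![\vec p]\!]$ and $f$ is a wide abstraction of $G$ to $G'$ (with respect to $L$ and $I$).
   Context: Fix a set $\mathsf{Val}$ of values, a subset $\mathsf{Loc}\subseteq\mathsf{Val}$ of locations, a set $\mathsf{Method}$ of methods, a finite set of threads $\mathsf{Tid}=\{1,\dots,T\}$, and $\mathsf{EventId}=\mathbb N$. Programs. Sequential programs are given by the grammar $p::= v \mid m(v_1,\dots,v_k)\mid \mathtt{let}\ p\ \mathsf f\mid \mathtt{loop}\ p\mid \mathtt{break}_k\ v$, where $v,v_i\in\mathsf{Val}$, $m\in\mathsf{Method}$, $\mathsf f:\mathsf{Val}\to\mathsf{SeqProg}$, and $k\in\mathbb N^{+}$. A concurrent program is a tuple $\vec p=\langle p_1,\dots,p_T\rangle$ of sequential programs, $p_t$ run by thread $t$. Events and plain executions. Labels are $\mathsf{Lab}=\mathsf{Method}\times\mathsf{Val}^*\times\mathsf{Val}$ (method, inputs, output); events are $\mathsf{Event}=\mathsf{Tid}\times\mathsf{EventId}\times\mathsf{Lab}$; for $e=\langle t,\iota,l\rangle$, $\mathrm{thread}(e)=t$.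 A plain execution is a pair $\langle E,po\rangle$ with $E\subseteq\mathsf{Event}$, $po\subseteq E\times E$, $po=\bigcup_{t}po|_t$, where $po|_t$ (restriction to events of thread $t$) is a strict total order on the events of $t$. Write $\emptyset_G=\langle\emptyset,\emptyset\rangle$ and $\{e\}_G=\langle\{e\},\emptyset\rangle$. For $G_i=\langle E_i,po_i\rangle$ with $E_1\cap E_2=\emptyset$: $G_1;G_2=\langle E_1\cup E_2,\,po_1\cup po_2\cup(E_1\times E_2)\rangle$ and $G_1\parallel G_2=\langle E_1\cup E_2,\,po_1\cup po_2\rangle$. Plain semantics. $[\![p]\!]_t$ is a set of pairs $\langle\langle v,k\rangle,G\rangle$ (output value $v$, break number $k\in\mathbb N$, plain execution $G$): $[\![v]\!]_t=\{\langle\langle v,0\rangle,\emptyset_G\rangle\}$; $[\![\mathtt{break}_k\,v]\!]_t=\{\langle\langle v,k\rangle,\emptyset_G\rangle\}$; $[\![m(\vec v)]\!]_t=\{\langle\langle v',0\rangle,\{\langle t,\iota,\langle m,\vec v,v'\rangle\rangle\}_G\rangle : v'\in\mathsf{Val},\iota\in\mathsf{EventId}\}$; $[\![\mathtt{let}\ p\ \mathsf f]\!]_t=\{\langle r,G_1;G_2\rangle:\langle\langle v,0\rangle,G_1\rangle\in[\![p]\!]_t,\ \langle r,G_2\rangle\in[\![\mathsf f\,v]\!]_t\}\cup\{\langle\langle v,k\rangle,G_1\rangle\in[\![p]\!]_t: k\neq0\}$; $[\![\mathtt{loop}\ p]\!]_t=\bigcup_{j\in\mathbb N}\{\langle\langle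 v,k\rangle,G_0;\dots;G_j\rangle : (\forall i<j.\ \langle\langle\_,0\rangle,G_i\rangle\in[\![p]\!]_t)\wedge\langle\langle v,k+1\rangle,G_j\rangle\in[\![p]\!]_t\}$ (compositions taken only when event sets are disjoint). For concurrent programs, $[\![\langle p_1,\dots,p_T\rangle]\!]=\{\langle\langle v_1,\dots,v_T\rangle,\parallel_{t}G_t\rangle:\forall t.\ \langle\langle v_t,0\rangle,G_t\rangle\in[\![p_t]\!]_t\}$. Stamps and executions. Fix a set $\mathsf{Stamp}$ and a relation $to\subseteq\mathsf{Stamp}\times\mathsf{Stamp}$. An execution is $\langle E,po,stmp,so,hb\rangle$ where $\langle E,po\rangle$ is a plain execution, $stmp$ maps each event of $E$ to a nonempty set of stamps, inducing subevents $\mathsf{SEvent}=\{\langle e,a\rangle: e\in E, a\in stmp(e)\}$, and $so,hb\subseteq\mathsf{SEvent}\times\mathsf{SEvent}$. Its preserved program order is $ppo=\{\langle\langle e_1,a_1\rangle,\langle e_2,a_2\rangle\rangle:\langle e_1,e_2\rangle\in po,\ a_i\in stmp(e_i),\ \langle a_1,a_2\rangle\in to\}$. Libraries. A library is a triple $L=\langle M,\mathsf{loc},\mathcal C\rangle$: $M\subseteq\mathsf{Method}$; $\mathsf{loc}$ maps each event whose method lies in $M$ to a set of locations; $\mathcal C$ is a set of executions satisfying (monotonicity) if $\langle E,po,stmp,so,hb\rangle\in\mathcal C$ and $(ppo\cup so)^+\subseteq hb'\subseteq hb$ then $\langle E,po,stmp,so,hb'\rangle\in\mathcal C$, and (decomposability)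 if $\langle E_1\uplus E_2,po,stmp,so,hb\rangle\in\mathcal C$ and $\mathsf{loc}(E_1)\cap\mathsf{loc}(E_2)=\emptyset$ then its restriction to $E_1$ (restricting $po$, $stmp$, and $so,hb$ to subevents of events in $E_1$) is in $\mathcal C$. For a set $E$ of events, $E|_L$ is the set of events of $E$ whose method is in $L.M$. Two libraries are compatible if their method sets are disjoint. Implementations. An implementation of $L$ is a function $I:\mathsf{Tid}\times L.M\times\mathsf{Val}^*\to\mathsf{SeqProg}$. It is well defined for $L$ using $\Lambda$ if $L\notin\Lambda$ and for all $t,m,\vec v$: $I(t,m,\vec v)$ only calls methods of libraries in $\Lambda$; no element of $[\![I(t,m,\vec v)]\!]_t$ has the form $\langle\langle\_,k+1\rangle,\_\rangle$; and if $\langle\langle v,0\rangle,\langle E,po\rangle\rangle\in[\![I(t,m,\vec v)]\!]_t$ then $E\neq\emptyset$. The translation $\langle\!\langle\cdot\rangle\!\rangle$ replaces, in thread $t$, each call $m(\vec v)$ with $m\in L.M$ by $I(t,m,\vec v)$ and leaves everything else unchanged: $\langle\!\langle v\rangle\!\rangle_t=v$, $\langle\!\langle\mathtt{break}_k v\rangle\!\rangle_t=\mathtt{break}_k v$, $\langle\!\langle\mathtt{loop}\,p\rangle\!\rangle_t=\mathtt{loop}\,\langle\!\langle p\rangle\!\rangle_t$, $\langle\!\langle\mathtt{let}\,p\,\mathsf f\rangle\!\rangle_t=\mathtt{let}\,\langle\!\langle p\rangle\!\rangle_t\,(\lambda v.\langle\!\langle\mathsf f\,v\rangle\!\rangle_t)$,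 and $\langle\!\langle\langle p_1,\dots,p_T\rangle\rangle\!\rangle_I=\langle\langle\!\langle p_1\rangle\!\rangle_1,\dots,\langle\!\langle p_T\rangle\!\rangle_T\rangle$. Wide abstraction. For plain executions $G=\langle E,po\rangle$ (using methods of $\Lambda$) and $G'=\langle E',po'\rangle$ (using methods of $\Lambda\uplus\{L\}$), a function $f:E\to E'$ is a wide abstraction of $G$ to $G'$ if: $f$ is surjective; $E|_L=\emptyset$; for every $x\in E$, if $f(x)$ is not an event of $L$ then $f(x)=x$; $f(po)\subseteq(po')^*$ (where $f(r)=\{\langle f(x),f(y)\rangle:\langle x,y\rangle\in r\}$ and $^*$ is reflexive-transitive closure); for all $e_1,e_2\in E$, $\langle f(e_1),f(e_2)\rangle\in po'$ implies $\langle e_1,e_2\rangle\in po$; and for every $e'=\langle t,\iota,\langle m,\vec v,v'\rangle\rangle\in E'$ with $m\in L.M$, $\langle\langle v',0\rangle,G|_{f^{-1}(e')}\rangle\in[\![I(t,m,\vec v)]\!]_t$, where $G|_A=\langle A,po\cap(A\times A)\rangle$. *)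

theory Defs
  imports Main
begin

text \<open>Values 'v, methods 'm. Threads and event ids are naturals; Tid = {1..T}.\<close>

type_synonym ('v,'m) lab = "'m \<times> 'v list \<times> 'v"
type_synonym ('v,'m) event = "nat \<times> nat \<times> ('v,'m) lab"
type_synonym ('v,'m) pexec = "('v,'m) event set \<times> ('v,'m) event rel"

definition ev_thread :: "('v,'m) event \<Rightarrow> nat" where
  "ev_thread e = fst e"
definition ev_method :: "('v,'m) event \<Rightarrow> 'm" where
  "ev_method e = fst (snd (snd e))"
definition ev_inputs :: "('v,'m) event \<Rightarrow> 'v list" where
  "ev_inputs e = fst (snd (snd (snd e)))"
definition ev_output :: "('v,'m) event \<Rightarrow> 'v" where
  "ev_output e = snd (snd (snd (snd e)))"

definition thread_po :: "('v,'m) event rel \<Rightarrow> nat \<Rightarrow> ('v,'m) event rel" where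
  "thread_po po t = {(x,y) \<in> po. ev_thread x = t \<and> ev_thread y = t}"

definition plain_exec :: "nat \<Rightarrow> ('v,'m) pexec \<Rightarrow> bool" where
  "plain_exec T G \<longleftrightarrow>
     (\<forall>e \<in> fst G. ev_thread e \<in> {1..T}) \<and>
     snd G \<subseteq> fst G \<times> fst G \<and>
     snd G = (\<Union>t\<in>{1..T}. thread_po (snd G) t) \<and>
     (\<forall>t\<in>{1..T}. strict_linear_order_on {e \<in> fst G. ev_thread e = t} (thread_po (snd G) t))"

definition emptyG :: "('v,'m) pexec" where
  "emptyG = ({}, {})"

definition seqG :: "('v,'m) pexec \<Rightarrow> ('v,'m) pexec \<Rightarrow> ('v,'m) pexec" where
  "seqG G1 G2 = (fst G1 \<union> fst G2, snd G1 \<union> snd G2 \<union> (fst G1 \<times> fst G2))"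

definition parG :: "('v,'m) pexec \<Rightarrow> ('v,'m) pexec \<Rightarrow> ('v,'m) pexec" where
  "parG G1 G2 = (fst G1 \<union> fst G2, snd G1 \<union> snd G2)"

definition seq_list :: "('v,'m) pexec list \<Rightarrow> ('v,'m) pexec" where
  "seq_list Gs = foldr seqG Gs emptyG"

definition par_list :: "('v,'m) pexec list \<Rightarrow> ('v,'m) pexec" where
  "par_list Gs = foldr parG Gs emptyG"

definition disj_list :: "('v,'m) pexec list \<Rightarrow> bool" where
  "disj_list Gs \<longleftrightarrow> (\<forall>i<length Gs. \<forall>j<length Gs. i \<noteq> j \<longrightarrow> fst (Gs!i) \<inter> fst (Gs!j) = {})"

definition restrictG :: "('v,'m) pexec \<Rightarrow> ('v,'m) event set \<Rightarrow> ('v,'m) pexec" where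
  "restrictG G A = (A, snd G \<inter> (A \<times> A))"

datatype ('v,'m) prog =
    PVal 'v
  | PCall 'm "'v list"
  | PLet "('v,'m) prog" "'v \<Rightarrow> ('v,'m) prog"
  | PLoop "('v,'m) prog"
  | PBreak nat 'v

inductive valid_prog :: "('v,'m) prog \<Rightarrow> bool" where
  "valid_prog (PVal v)"
| "valid_prog (PCall m vs)"
| "valid_prog p \<Longrightarrow> (\<forall>v. valid_prog (f v)) \<Longrightarrow> valid_prog (PLet p f)"
| "valid_prog p \<Longrightarrow> valid_prog (PLoop p)"
| "k > 0 \<Longrightarrow> valid_prog (PBreak k v)"

inductive calls_only :: "'m set \<Rightarrow> ('v,'m) prog \<Rightarrow> bool" for Ms where
  "calls_only Ms (PVal v)"
| "m \<in> Ms \<Longrightarrow> calls_only Ms (PCall m vs)"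
| "calls_only Ms p \<Longrightarrow> (\<forall>v. calls_only Ms (f v)) \<Longrightarrow> calls_only Ms (PLet p f)"
| "calls_only Ms p \<Longrightarrow> calls_only Ms (PLoop p)"
| "calls_only Ms (PBreak k v)"

primrec sem :: "nat \<Rightarrow> ('v,'m) prog \<Rightarrow> (('v \<times> nat) \<times> ('v,'m) pexec) set" where
  "sem t (PVal v) = {((v,0), emptyG)}"
| "sem t (PBreak k v) = {((v,k), emptyG)}"
| "sem t (PCall m vs) = {((v',0), ({(t,\<iota>,(m,vs,v'))}, {})) | v' \<iota>. True}"
| "sem t (PLet p f) =
     {(r, seqG G1 G2) | v G1 r G2. ((v,0),G1) \<in> sem t p \<and> (r,G2) \<in> sem t (f v)
                                    \<and> fst G1 \<inter> fst G2 = {}}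
     \<union> {((v,k),G1) | v k G1. ((v,k),G1) \<in> sem t p \<and> k \<noteq> 0}"
| "sem t (PLoop p) =
     {((v,k), seq_list Gs) | v k Gs. Gs \<noteq> [] \<and> disj_list Gs
        \<and> (\<forall>i < length Gs - 1. \<exists>u. ((u,0), Gs!i) \<in> sem t p)
        \<and> ((v, Suc k), last Gs) \<in> sem t p}"

text \<open>Concurrent programs: lists of length T; entry i is run by thread i+1.\<close>
definition conc_sem :: "('v,'m) prog list \<Rightarrow> ('v list \<times> ('v,'m) pexec) set" where
  "conc_sem ps = {(vs, par_list Gs) | vs Gs. length vs = length ps \<and> length Gs = length ps
       \<and> disj_list Gs \<and> (\<forall>i<length ps. ((vs!i, 0), Gs!i) \<in> sem (Suc i) (ps!i))}"

type_synonym ('v,'m,'s) sevent = "('v,'m) event \<times> 's"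
type_synonym ('v,'m,'s) execution =
  "('v,'m) event set \<times> ('v,'m) event rel \<times> (('v,'m) event \<Rightarrow> 's set)
     \<times> ('v,'m,'s) sevent rel \<times> ('v,'m,'s) sevent rel"

definition sevents :: "('v,'m) event set \<Rightarrow> (('v,'m) event \<Rightarrow> 's set) \<Rightarrow> ('v,'m,'s) sevent set" where
  "sevents E stmp = {(e,a). e \<in> E \<and> a \<in> stmp e}"

definition ppo :: "('s \<times> 's) set \<Rightarrow> ('v,'m) event rel \<Rightarrow> (('v,'m) event \<Rightarrow> 's set) \<Rightarrow> ('v,'m,'s) sevent rel" where
  "ppo to po stmp = {((e1,a1),(e2,a2)). (e1,e2) \<in> po \<and> a1 \<in> stmp e1 \<and> a2 \<in> stmp e2 \<and> (a1,a2) \<in> to}"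

text \<open>stmp is a function on E (represented as returning the empty set outside E).\<close>
definition is_execution :: "nat \<Rightarrow> ('v,'m,'s) execution \<Rightarrow> bool" where
  "is_execution T X \<longleftrightarrow> (case X of (E,po,stmp,so,hb) \<Rightarrow>
      plain_exec T (E,po) \<and> (\<forall>e\<in>E. stmp e \<noteq> {}) \<and> (\<forall>e. e \<notin> E \<longrightarrow> stmp e = {})
      \<and> so \<subseteq> sevents E stmp \<times> sevents E stmp \<and> hb \<subseteq> sevents E stmp \<times> sevents E stmp)"

definition restrict_exec :: "('v,'m,'s) execution \<Rightarrow> ('v,'m) event set \<Rightarrow> ('v,'m,'s) execution" where
  "restrict_exec X A = (case X of (E,po,stmp,so,hb) \<Rightarrow>
      (A, po \<inter> (A \<times> A), (\<lambda>e. if e \<in> A then stmp e else {}),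
       so \<inter> (sevents A stmp \<times> sevents A stmp), hb \<inter> (sevents A stmp \<times> sevents A stmp)))"

record ('v,'m,'s) library =
  lib_M :: "'m set"
  lib_loc :: "('v,'m) event \<Rightarrow> 'v set"
  lib_C :: "('v,'m,'s) execution set"

definition is_library :: "nat \<Rightarrow> 'v set \<Rightarrow> ('s \<times> 's) set \<Rightarrow> ('v,'m,'s) library \<Rightarrow> bool" where
  "is_library T Loc to L \<longleftrightarrow>
     (\<forall>e. ev_method e \<in> lib_M L \<longrightarrow> lib_loc L e \<subseteq> Loc) \<and>
     (\<forall>X \<in> lib_C L. is_execution T X) \<and>
     (\<forall>E po stmp so hb hb'. (E,po,stmp,so,hb) \<in> lib_C L \<longrightarrow>
          (ppo to po stmp \<union> so)\<^sup>+ \<subseteq> hb' \<longrightarrow> hb' \<subseteq> hb \<longrightarrow> (E,po,stmp,so,hb') \<in> lib_C L) \<and>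
     (\<forall>E1 E2 po stmp so hb. (E1 \<union> E2,po,stmp,so,hb) \<in> lib_C L \<longrightarrow> E1 \<inter> E2 = {} \<longrightarrow>
          (\<Union>(lib_loc L ` E1)) \<inter> (\<Union>(lib_loc L ` E2)) = {} \<longrightarrow>
          restrict_exec (E1 \<union> E2,po,stmp,so,hb) E1 \<in> lib_C L)"

definition compatible :: "('v,'m,'s) library \<Rightarrow> ('v,'m,'s) library \<Rightarrow> bool" where
  "compatible L1 L2 \<longleftrightarrow> lib_M L1 \<inter> lib_M L2 = {}"

definition lib_methods :: "('v,'m,'s) library set \<Rightarrow> 'm set" where
  "lib_methods \<Lambda> = (\<Union>L\<in>\<Lambda>. lib_M L)"

type_synonym ('v,'m) impl = "nat \<Rightarrow> 'm \<Rightarrow> 'v list \<Rightarrow> ('v,'m) prog"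

definition impl_well_defined ::
  "nat \<Rightarrow> ('v,'m) impl \<Rightarrow> ('v,'m,'s) library \<Rightarrow> ('v,'m,'s) library set \<Rightarrow> bool" where
  "impl_well_defined T I L \<Lambda> \<longleftrightarrow> L \<notin> \<Lambda> \<and>
     (\<forall>t\<in>{1..T}. \<forall>m\<in>lib_M L. \<forall>vs.
        valid_prog (I t m vs) \<and>
        calls_only (lib_methods \<Lambda>) (I t m vs) \<and>
        (\<forall>v k G. ((v, Suc k), G) \<notin> sem t (I t m vs)) \<and>
        (\<forall>v G. ((v, 0), G) \<in> sem t (I t m vs) \<longrightarrow> fst G \<noteq> {}))"

primrec translate :: "('v,'m) impl \<Rightarrow> 'm set \<Rightarrow> nat \<Rightarrow> ('v,'m) prog \<Rightarrow> ('v,'m) prog" where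
  "translate I Ms t (PVal v) = PVal v"
| "translate I Ms t (PBreak k v) = PBreak k v"
| "translate I Ms t (PCall m vs) = (if m \<in> Ms then I t m vs else PCall m vs)"
| "translate I Ms t (PLoop p) = PLoop (translate I Ms t p)"
| "translate I Ms t (PLet p f) = PLet (translate I Ms t p) (\<lambda>v. translate I Ms t (f v))"

definition translate_conc :: "('v,'m) impl \<Rightarrow> 'm set \<Rightarrow> ('v,'m) prog list \<Rightarrow> ('v,'m) prog list" where
  "translate_conc I Ms ps = map (\<lambda>i. translate I Ms (Suc i) (ps!i)) [0..<length ps]"

definition wide_abstraction ::
  "('v,'m,'s) library \<Rightarrow> ('v,'m) impl \<Rightarrow> (('v,'m) event \<Rightarrow> ('v,'m) event)
     \<Rightarrow> ('v,'m) pexec \<Rightarrow> ('v,'m) pexec \<Rightarrow> bool" where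
  "wide_abstraction L I f G G' \<longleftrightarrow>
     f ` fst G = fst G' \<and>
     (\<forall>e\<in>fst G. ev_method e \<notin> lib_M L) \<and>
     (\<forall>x\<in>fst G. ev_method (f x) \<notin> lib_M L \<longrightarrow> f x = x) \<and>
     (\<forall>(x,y)\<in>snd G. (f x, f y) \<in> (snd G')\<^sup>*) \<and>
     (\<forall>e1\<in>fst G. \<forall>e2\<in>fst G. (f e1, f e2) \<in> snd G' \<longrightarrow> (e1,e2) \<in> snd G) \<and>
     (\<forall>e'\<in>fst G'. ev_method e' \<in> lib_M L \<longrightarrow>
        ((ev_output e', 0), restrictG G {x \<in> fst G. f x = e'})
          \<in> sem (ev_thread e') (I (ev_thread e') (ev_method e') (ev_inputs e')))"

end

theory Submission
  imports Defs
begin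

definition combG :: "bool \<Rightarrow> ('v,'m) pexec \<Rightarrow> ('v,'m) pexec \<Rightarrow> ('v,'m) pexec" where
  "combG b G1 G2 = (fst G1 \<union> fst G2, snd G1 \<union> snd G2 \<union> (if b then fst G1 \<times> fst G2 else {}))"

lemma seqG_comb: "seqG = combG True" by (auto simp: fun_eq_iff seqG_def combG_def)
lemma parG_comb: "parG = combG False" by (auto simp: fun_eq_iff parG_def combG_def)

definition wfG :: "('v,'m) pexec \<Rightarrow> bool" where
  "wfG G \<longleftrightarrow> snd G \<subseteq> fst G \<times> fst G \<and> finite (fst G)"

lemma foldr_comb_fst: "fst (foldr (combG b) Gs emptyG) = (\<Union>G\<in>set Gs. fst G)"
  by (induction Gs) (auto simp: combG_def emptyG_def)

lemma foldr_comb_wf: "(\<forall>G\<in>set Gs. wfG G) \<Longrightarrow> wfG (foldr (combG b) Gs emptyG)"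
  by (induction Gs) (auto simp: combG_def emptyG_def wfG_def foldr_comb_fst)

lemma comb_wf: "wfG G1 \<Longrightarrow> wfG G2 \<Longrightarrow> wfG (combG b G1 G2)"
  by (auto simp: combG_def wfG_def)

lemma disj_list_Cons[simp]: "disj_list (G # Gs) \<longleftrightarrow> disj_list Gs \<and> (\<forall>G2\<in>set Gs. fst G \<inter> fst G2 = {})"
proof
  assume a: "disj_list (G # Gs)"
  have "disj_list Gs" unfolding disj_list_def
  proof (intro allI impI)
    fix i j assume "i < length Gs" "j < length Gs" "i \<noteq> j"
    then show "fst (Gs ! i) \<inter> fst (Gs ! j) = {}" using a[unfolded disj_list_def, rule_format, of "Suc i" "Suc j"] by simp
  qed
  moreover have "\<forall>G2\<in>set Gs. fst G \<inter> fst G2 = {}"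
  proof
    fix G2 assume "G2 \<in> set Gs"
    then obtain j where "j < length Gs" "G2 = Gs ! j" by (auto simp: in_set_conv_nth)
    then show "fst G \<inter> fst G2 = {}" using a[unfolded disj_list_def, rule_format, of 0 "Suc j"] by simp
  qed
  ultimately show "disj_list Gs \<and> (\<forall>G2\<in>set Gs. fst G \<inter> fst G2 = {})" by blast
next
  assume a: "disj_list Gs \<and> (\<forall>G2\<in>set Gs. fst G \<inter> fst G2 = {})"
  show "disj_list (G # Gs)" unfolding disj_list_def
  proof (intro allI impI)
    fix i j assume h: "i < length (G#Gs)" "j < length (G#Gs)" "i \<noteq> j"
    show "fst ((G#Gs) ! i) \<inter> fst ((G#Gs) ! j) = {}"
    proof (cases i)
      case 0
      then obtain j' where "j = Suc j'" using h by (cases j) auto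
      then show ?thesis using a h 0 by (auto simp: nth_mem)
    next
      case (Suc i')
      show ?thesis
      proof (cases j)
        case 0 then show ?thesis using a h Suc by (auto simp: nth_mem)
      next
        case (Suc j') then show ?thesis using a h \<open>i = Suc i'\<close> unfolding disj_list_def by auto
      qed
    qed
  qed
qed

lemma sem_wf: "(r, G) \<in> sem t p \<Longrightarrow> wfG G"
proof (induction p arbitrary: r G)
  case (PLoop p)
  then obtain Gs where "G = seq_list Gs" "\<forall>i < length Gs - 1. \<exists>u. ((u,0), Gs!i) \<in> sem t p"
     "\<exists>v k. ((v, Suc k), last Gs) \<in> sem t p" "Gs \<noteq> []" by auto
  then have "\<forall>G\<in>set Gs. wfG G" using PLoop.IH
    by (metis (no_types, lifting) Suc_pred' diff_Suc_1 in_set_conv_nth last_conv_nth length_greater_0_conv less_antisym)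
  moreover have "G = foldr (combG True) Gs emptyG" using \<open>G = seq_list Gs\<close> by (simp add: seq_list_def seqG_comb)
  ultimately show ?case using foldr_comb_wf by blast
next
  case (PLet p f)
  from PLet.prems consider (a) v G1 G2 r' where "((v, 0), G1) \<in> sem t p" "(r', G2) \<in> sem t (f v)" "G = seqG G1 G2"
    | (b) "(r, G) \<in> sem t p" by auto
  then show ?case
  proof cases
    case a
    then have "wfG G1" "wfG G2" using PLet.IH by blast+
    then show ?thesis using comb_wf seqG_comb a by metis
  next
    case b then show ?thesis using PLet.IH by blast
  qed
next
  case (PCall m vs) then show ?case by (auto simp: wfG_def)
next case (PVal v) then show ?case by (simp add: wfG_def emptyG_def)
next case (PBreak k v) then show ?case by (simp add: wfG_def emptyG_def)
qed

lemma sem_thread_methods: "(r, G) \<in> sem t p \<Longrightarrow> calls_only Ms p \<Longrightarrow> \<forall>e\<in>fst G. ev_method e \<in> Ms"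
proof (induction p arbitrary: r G)
  case (PLoop p)
  then obtain Gs where "G = seq_list Gs" "\<forall>i < length Gs - 1. \<exists>u. ((u,0), Gs!i) \<in> sem t p"
     "\<exists>v k. ((v, Suc k), last Gs) \<in> sem t p" "Gs \<noteq> []" by auto
  moreover have "calls_only Ms p" using PLoop.prems(2) by (cases rule: calls_only.cases) auto
  ultimately have "\<forall>G\<in>set Gs. \<forall>e\<in>fst G. ev_method e \<in> Ms" using PLoop.IH
    by (metis (no_types, lifting) Suc_pred' diff_Suc_1 in_set_conv_nth last_conv_nth length_greater_0_conv less_antisym)
  moreover have "fst G = (\<Union>G\<in>set Gs. fst G)" using \<open>G = seq_list Gs\<close> foldr_comb_fst by (simp add: seq_list_def seqG_comb)
  ultimately show ?case by blast
next
  case (PLet p f)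
  have "calls_only Ms p" "\<forall>v. calls_only Ms (f v)" using PLet.prems(2) by (cases rule: calls_only.cases; auto)+
  from PLet.prems(1) consider (a) v G1 G2 r' where "((v, 0), G1) \<in> sem t p" "(r', G2) \<in> sem t (f v)" "G = seqG G1 G2"
    | (b) "(r, G) \<in> sem t p" by auto
  then show ?case
  proof cases
    case a
    then have "\<forall>e\<in>fst G1. ev_method e \<in> Ms" "\<forall>e\<in>fst G2. ev_method e \<in> Ms"
      using PLet.IH \<open>calls_only Ms p\<close> \<open>\<forall>v. calls_only Ms (f v)\<close> by blast+
    then show ?thesis using a by (simp add: seqG_def del: ball_simps) blast
  next
    case b then show ?thesis using PLet.IH \<open>calls_only Ms p\<close> by blast
  qed
next
  case (PCall m vs)
  have "m \<in> Ms" using PCall.prems(2) by (cases rule: calls_only.cases) auto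
  then show ?case using PCall.prems(1) by (auto simp: ev_method_def)
qed (auto simp: emptyG_def)


definition abs_ok :: "('v,'m,'s) library \<Rightarrow> ('v,'m) impl \<Rightarrow> (('v,'m) event \<Rightarrow> nat) \<Rightarrow> (('v,'m) event \<Rightarrow> ('v,'m) event)
     \<Rightarrow> ('v,'m) pexec \<Rightarrow> ('v,'m) pexec \<Rightarrow> bool" where
  "abs_ok L I h f G G' \<longleftrightarrow>
     f ` fst G = fst G' \<and>
     (\<forall>e\<in>fst G. ev_method e \<notin> lib_M L) \<and>
     (\<forall>x\<in>fst G. ev_method (f x) \<notin> lib_M L \<longrightarrow> f x = x) \<and>
     (\<forall>x\<in>fst G. ev_method (f x) \<in> lib_M L \<longrightarrow> (\<exists>y\<in>fst G. f y = f x \<and> fst (snd (f x)) = h y)) \<and>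
     (\<forall>(x,y)\<in>snd G. (f x, f y) \<in> (snd G')\<^sup>*) \<and>
     (\<forall>e1\<in>fst G. \<forall>e2\<in>fst G. (f e1, f e2) \<in> snd G' \<longrightarrow> (e1,e2) \<in> snd G) \<and>
     (\<forall>e'\<in>fst G'. ev_method e' \<in> lib_M L \<longrightarrow>
        ((ev_output e', 0), restrictG G {x \<in> fst G. f x = e'})
          \<in> sem (ev_thread e') (I (ev_thread e') (ev_method e') (ev_inputs e')))"

lemma abs_ok_empty: "abs_ok L I h f emptyG emptyG"
  by (simp add: abs_ok_def emptyG_def)

lemma comb_abs:
  assumes A1: "abs_ok L I h f1 G1 G1'" and A2: "abs_ok L I h f2 G2 G2'"
   and W: "wfG G1" "wfG G2" "wfG G1'" "wfG G2'"
   and D: "fst G1 \<inter> fst G2 = {}" and H: "inj_on h (fst G1 \<union> fst G2)"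
  shows "fst G1' \<inter> fst G2' = {} \<and>
    abs_ok L I h (\<lambda>x. if x \<in> fst G1 then f1 x else f2 x) (combG b G1 G2) (combG b G1' G2')"
proof -
  obtain E1 po1 where g1: "G1 = (E1, po1)" by (cases G1)
  obtain E2 po2 where g2: "G2 = (E2, po2)" by (cases G2)
  obtain E1' po1' where g1': "G1' = (E1', po1')" by (cases G1')
  obtain E2' po2' where g2': "G2' = (E2', po2')" by (cases G2')
  define F where "F = (\<lambda>x. if x \<in> E1 then f1 x else f2 x)"
  note a1 = A1[unfolded abs_ok_def g1 g1' fst_conv snd_conv]
  note a2 = A2[unfolded abs_ok_def g2 g2' fst_conv snd_conv]
  have a1i: "f1 ` E1 = E1'" and a1n: "\<forall>e\<in>E1. ev_method e \<notin> lib_M L"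
    and a1d: "\<forall>x\<in>E1. ev_method (f1 x) \<notin> lib_M L \<longrightarrow> f1 x = x"
    and a1h: "\<forall>x\<in>E1. ev_method (f1 x) \<in> lib_M L \<longrightarrow> (\<exists>y\<in>E1. f1 y = f1 x \<and> fst (snd (f1 x)) = h y)"
    and a1p: "\<forall>(x,y)\<in>po1. (f1 x, f1 y) \<in> po1'\<^sup>*"
    and a1r: "\<forall>e1\<in>E1. \<forall>e2\<in>E1. (f1 e1, f1 e2) \<in> po1' \<longrightarrow> (e1,e2) \<in> po1"
    and a1l: "\<forall>e'\<in>E1'. ev_method e' \<in> lib_M L \<longrightarrow>
        ((ev_output e', 0), restrictG (E1,po1) {x \<in> E1. f1 x = e'})
          \<in> sem (ev_thread e') (I (ev_thread e') (ev_method e') (ev_inputs e'))"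
    using a1 by (simp_all add: g1)
  have a2i: "f2 ` E2 = E2'" and a2n: "\<forall>e\<in>E2. ev_method e \<notin> lib_M L"
    and a2d: "\<forall>x\<in>E2. ev_method (f2 x) \<notin> lib_M L \<longrightarrow> f2 x = x"
    and a2h: "\<forall>x\<in>E2. ev_method (f2 x) \<in> lib_M L \<longrightarrow> (\<exists>y\<in>E2. f2 y = f2 x \<and> fst (snd (f2 x)) = h y)"
    and a2p: "\<forall>(x,y)\<in>po2. (f2 x, f2 y) \<in> po2'\<^sup>*"
    and a2r: "\<forall>e1\<in>E2. \<forall>e2\<in>E2. (f2 e1, f2 e2) \<in> po2' \<longrightarrow> (e1,e2) \<in> po2"
    and a2l: "\<forall>e'\<in>E2'. ev_method e' \<in> lib_M L \<longrightarrow>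
        ((ev_output e', 0), restrictG (E2,po2) {x \<in> E2. f2 x = e'})
          \<in> sem (ev_thread e') (I (ev_thread e') (ev_method e') (ev_inputs e'))"
    using a2 by (simp_all add: g2)
  have w1: "po1 \<subseteq> E1 \<times> E1" and w2: "po2 \<subseteq> E2 \<times> E2" and w1': "po1' \<subseteq> E1' \<times> E1'" and w2': "po2' \<subseteq> E2' \<times> E2'"
    using W by (auto simp: wfG_def g1 g2 g1' g2')
  have d: "E1 \<inter> E2 = {}" using D g1 g2 by simp
  have hi: "inj_on h (E1 \<union> E2)" using H g1 g2 by simp
  have F1: "\<And>x. x \<in> E1 \<Longrightarrow> F x = f1 x \<and> f1 x \<in> E1'" using a1i by (auto simp: F_def)
  have F2: "\<And>x. x \<in> E2 \<Longrightarrow> F x = f2 x \<and> f2 x \<in> E2'" using a2i d by (auto simp: F_def)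
  have D': "E1' \<inter> E2' = {}"
  proof (rule ccontr)
    assume "E1' \<inter> E2' \<noteq> {}"
    then obtain e where e1: "e \<in> E1'" and e2: "e \<in> E2'" by blast
    obtain x1 where x1: "x1 \<in> E1" "f1 x1 = e" using e1 a1i by blast
    obtain x2 where x2: "x2 \<in> E2" "f2 x2 = e" using e2 a2i by blast
    show False
    proof (cases "ev_method e \<in> lib_M L")
      case True
      obtain y1 where y1: "y1 \<in> E1" "fst (snd e) = h y1" using a1h x1 True by blast
      obtain y2 where y2: "y2 \<in> E2" "fst (snd e) = h y2" using a2h x2 True by blast
      have "y1 = y2" using hi y1 y2 by (metis UnI1 UnI2 inj_on_def)
      then show False using y1 y2 d by blast
    next
      case False
      then have "x1 = e" "x2 = e" using a1d a2d x1 x2 by auto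
      then show False using x1 x2 d by blast
    qed
  qed
  have img: "F ` (E1 \<union> E2) = E1' \<union> E2'"
  proof -
    have "F ` E1 = f1 ` E1" using F1 by (auto simp: image_def)
    moreover have "F ` E2 = f2 ` E2" using F2 by (auto simp: image_def)
    ultimately show ?thesis using a1i a2i by (simp add: image_Un)
  qed
  have nonL: "\<forall>e\<in>E1 \<union> E2. ev_method e \<notin> lib_M L" using a1n a2n by blast
  have idc: "\<forall>x\<in>E1 \<union> E2. ev_method (F x) \<notin> lib_M L \<longrightarrow> F x = x" using a1d a2d F1 F2 by auto
  have hc: "\<forall>x\<in>E1 \<union> E2. ev_method (F x) \<in> lib_M L \<longrightarrow> (\<exists>y\<in>E1 \<union> E2. F y = F x \<and> fst (snd (F x)) = h y)"
  proof (intro ballI impI)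
    fix x assume x: "x \<in> E1 \<union> E2" and m: "ev_method (F x) \<in> lib_M L"
    show "\<exists>y\<in>E1 \<union> E2. F y = F x \<and> fst (snd (F x)) = h y"
    proof (cases "x \<in> E1")
      case True
      have "ev_method (f1 x) \<in> lib_M L" using m F1 True by simp
      then obtain y where "y \<in> E1" "f1 y = f1 x" "fst (snd (f1 x)) = h y" using a1h True by blast
      then show ?thesis using F1 True by (metis UnI1)
    next
      case False
      then have "x \<in> E2" using x by blast
      have "ev_method (f2 x) \<in> lib_M L" using m F2 \<open>x \<in> E2\<close> by simp
      then obtain y where "y \<in> E2" "f2 y = f2 x" "fst (snd (f2 x)) = h y" using a2h \<open>x \<in> E2\<close> by blast
      then show ?thesis using F2 \<open>x \<in> E2\<close> by (metis UnI2)
    qed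
  qed
  let ?X = "if b then E1 \<times> E2 else {}"
  let ?X' = "if b then E1' \<times> E2' else {}"
  have poc: "\<forall>(x,y)\<in>po1 \<union> po2 \<union> ?X. (F x, F y) \<in> (po1' \<union> po2' \<union> ?X')\<^sup>*"
  proof (intro ballI, clarify)
    fix x y assume xy: "(x, y) \<in> po1 \<union> po2 \<union> ?X"
    show "(F x, F y) \<in> (po1' \<union> po2' \<union> ?X')\<^sup>*"
    proof -
      consider "(x,y) \<in> po1" | "(x,y) \<in> po2" | "b" "x \<in> E1" "y \<in> E2" using xy by (auto split: if_splits)
      then show ?thesis
      proof cases
        case 1
        then have "(f1 x, f1 y) \<in> po1'\<^sup>*" using a1p by blast
        moreover have "F x = f1 x" "F y = f1 y" using 1 w1 F1 by blast+
        moreover have "po1'\<^sup>* \<subseteq> (po1' \<union> po2' \<union> ?X')\<^sup>*" by (rule rtrancl_mono) blast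
        ultimately show ?thesis by auto
      next
        case 2
        then have "(f2 x, f2 y) \<in> po2'\<^sup>*" using a2p by blast
        moreover have "F x = f2 x" "F y = f2 y" using 2 w2 F2 by blast+
        moreover have "po2'\<^sup>* \<subseteq> (po1' \<union> po2' \<union> ?X')\<^sup>*" by (rule rtrancl_mono) blast
        ultimately show ?thesis by auto
      next
        case 3
        then have "(F x, F y) \<in> ?X'" using F1 F2 by auto
        then show ?thesis by blast
      qed
    qed
  qed
  have rev: "\<forall>e1\<in>E1 \<union> E2. \<forall>e2\<in>E1 \<union> E2. (F e1, F e2) \<in> po1' \<union> po2' \<union> ?X' \<longrightarrow> (e1,e2) \<in> po1 \<union> po2 \<union> ?X"
  proof (intro ballI impI)
    fix e1 e2 assume e1: "e1 \<in> E1 \<union> E2" and e2: "e2 \<in> E1 \<union> E2" and r: "(F e1, F e2) \<in> po1' \<union> po2' \<union> ?X'"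
    have n2: "\<And>x. x \<in> E2 \<Longrightarrow> x \<notin> E1" using d by blast
    have X': "?X' \<subseteq> E1' \<times> E2'" by (simp split: if_splits)
    show "(e1,e2) \<in> po1 \<union> po2 \<union> ?X"
    proof (cases "e1 \<in> E1")
      case c1: True
      have p1: "F e1 = f1 e1" "f1 e1 \<in> E1'" using F1[OF c1] by simp_all
      show ?thesis
      proof (cases "e2 \<in> E1")
        case True
        have p2: "F e2 = f1 e2" "f1 e2 \<in> E1'" using F1[OF True] by simp_all
        have r': "(f1 e1, f1 e2) \<in> po1' \<union> po2' \<union> ?X'" using r p1(1) p2(1) by simp
        have "(f1 e1, f1 e2) \<notin> po2'" using p2(2) w2' D' by blast
        moreover have "(f1 e1, f1 e2) \<notin> ?X'" using p2(2) X' D' by blast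
        ultimately have "(f1 e1, f1 e2) \<in> po1'" using r' by blast
        then show ?thesis using a1r c1 True by blast
      next
        case False
        then have c2: "e2 \<in> E2" using e2 by blast
        have p2: "F e2 = f2 e2" "f2 e2 \<in> E2'" using F2[OF c2] by simp_all
        have r': "(f1 e1, f2 e2) \<in> po1' \<union> po2' \<union> ?X'" using r p1(1) p2(1) by simp
        have "(f1 e1, f2 e2) \<notin> po1'" using p2(2) w1' D' by blast
        moreover have "(f1 e1, f2 e2) \<notin> po2'" using p1(2) w2' D' by blast
        ultimately have "(f1 e1, f2 e2) \<in> ?X'" using r' by blast
        then have "b" by (simp split: if_splits)
        then show ?thesis using c1 c2 by simp
      qed
    next
      case c1: False
      then have c1': "e1 \<in> E2" using e1 by blast
      have p1: "F e1 = f2 e1" "f2 e1 \<in> E2'" using F2[OF c1'] by simp_all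
      show ?thesis
      proof (cases "e2 \<in> E1")
        case True
        have p2: "F e2 = f1 e2" "f1 e2 \<in> E1'" using F1[OF True] by simp_all
        have r': "(f2 e1, f1 e2) \<in> po1' \<union> po2' \<union> ?X'" using r p1(1) p2(1) by simp
        have "(f2 e1, f1 e2) \<notin> po1'" using p1(2) w1' D' by blast
        moreover have "(f2 e1, f1 e2) \<notin> po2'" using p2(2) w2' D' by blast
        moreover have "(f2 e1, f1 e2) \<notin> ?X'" using p1(2) X' D' by blast
        ultimately show ?thesis using r' by blast
      next
        case False
        then have c2: "e2 \<in> E2" using e2 by blast
        have p2: "F e2 = f2 e2" "f2 e2 \<in> E2'" using F2[OF c2] by simp_all
        have r': "(f2 e1, f2 e2) \<in> po1' \<union> po2' \<union> ?X'" using r p1(1) p2(1) by simp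
        have "(f2 e1, f2 e2) \<notin> po1'" using p1(2) w1' D' by blast
        moreover have "(f2 e1, f2 e2) \<notin> ?X'" using p1(2) X' D' by blast
        ultimately have "(f2 e1, f2 e2) \<in> po2'" using r' by blast
        then show ?thesis using a2r c1' c2 by blast
      qed
    qed
  qed
  have last: "\<forall>e'\<in>E1' \<union> E2'. ev_method e' \<in> lib_M L \<longrightarrow>
        ((ev_output e', 0), restrictG (E1 \<union> E2, po1 \<union> po2 \<union> ?X) {x \<in> E1 \<union> E2. F x = e'})
          \<in> sem (ev_thread e') (I (ev_thread e') (ev_method e') (ev_inputs e'))"
  proof (intro ballI impI)
    fix e' assume e': "e' \<in> E1' \<union> E2'" and m: "ev_method e' \<in> lib_M L"
    show "((ev_output e', 0), restrictG (E1 \<union> E2, po1 \<union> po2 \<union> ?X) {x \<in> E1 \<union> E2. F x = e'})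
          \<in> sem (ev_thread e') (I (ev_thread e') (ev_method e') (ev_inputs e'))"
    proof (cases "e' \<in> E1'")
      case True
      have n: "\<forall>x\<in>E2. F x \<noteq> e'"
      proof
        fix x assume x: "x \<in> E2"
        have "F x = f2 x" "f2 x \<in> E2'" using F2[OF x] by simp_all
        then show "F x \<noteq> e'" using True D' by (metis IntI empty_iff)
      qed
      have S: "{x \<in> E1 \<union> E2. F x = e'} = {x \<in> E1. f1 x = e'}"
      proof (rule set_eqI)
        fix x show "x \<in> {x \<in> E1 \<union> E2. F x = e'} \<longleftrightarrow> x \<in> {x \<in> E1. f1 x = e'}"
        proof (cases "x \<in> E1")
          case True then show ?thesis using F1[OF True] by simp
        next
          case False then show ?thesis using n by auto
        qed
      qed
      have "restrictG (E1 \<union> E2, po1 \<union> po2 \<union> ?X) {x \<in> E1. f1 x = e'} = restrictG (E1, po1) {x \<in> E1. f1 x = e'}"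
        using w2 d by (auto simp: restrictG_def)
      then show ?thesis using a1l True m S by simp
    next
      case False
      then have T: "e' \<in> E2'" using e' by blast
      have n: "\<forall>x\<in>E1. F x \<noteq> e'"
      proof
        fix x assume x: "x \<in> E1"
        have "F x = f1 x" "f1 x \<in> E1'" using F1[OF x] by simp_all
        then show "F x \<noteq> e'" using T D' by (metis IntI empty_iff)
      qed
      have S: "{x \<in> E1 \<union> E2. F x = e'} = {x \<in> E2. f2 x = e'}"
      proof (rule set_eqI)
        fix x show "x \<in> {x \<in> E1 \<union> E2. F x = e'} \<longleftrightarrow> x \<in> {x \<in> E2. f2 x = e'}"
        proof (cases "x \<in> E2")
          case True then show ?thesis using F2[OF True] n by auto
        next
          case False then show ?thesis using n by auto
        qed
      qed
      have "restrictG (E1 \<union> E2, po1 \<union> po2 \<union> ?X) {x \<in> E2. f2 x = e'} = restrictG (E2, po2) {x \<in> E2. f2 x = e'}"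
        using w1 d by (auto simp: restrictG_def)
      then show ?thesis using a2l T m S by simp
    qed
  qed
  have "abs_ok L I h F (E1 \<union> E2, po1 \<union> po2 \<union> ?X) (E1' \<union> E2', po1' \<union> po2' \<union> ?X')"
    unfolding abs_ok_def fst_conv snd_conv by (intro conjI img nonL idc hc poc rev last)
  moreover have "combG b G1 G2 = (E1 \<union> E2, po1 \<union> po2 \<union> ?X)"
    unfolding combG_def g1 g2 fst_conv snd_conv by (rule refl)
  moreover have "combG b G1' G2' = (E1' \<union> E2', po1' \<union> po2' \<union> ?X')"
    unfolding combG_def g1' g2' fst_conv snd_conv by (rule refl)
  ultimately have ab: "abs_ok L I h F (combG b G1 G2) (combG b G1' G2')" by (simp only:)
  have Feq: "(\<lambda>x. if x \<in> fst G1 then f1 x else f2 x) = F" using g1 F_def by simp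
  show ?thesis
  proof (rule conjI)
    show "fst G1' \<inter> fst G2' = {}" using D' g1' g2' by simp
    show "abs_ok L I h (\<lambda>x. if x \<in> fst G1 then f1 x else f2 x) (combG b G1 G2) (combG b G1' G2')"
      unfolding Feq by (rule ab)
  qed
qed


lemma list_comb:
  "length Gs' = length Gs \<Longrightarrow> length fs = length Gs \<Longrightarrow>
   (\<forall>i<length Gs. abs_ok L I h (fs!i) (Gs!i) (Gs'!i) \<and> wfG (Gs!i) \<and> wfG (Gs'!i)) \<Longrightarrow>
   disj_list Gs \<Longrightarrow> inj_on h (\<Union>G\<in>set Gs. fst G) \<Longrightarrow>
   \<exists>F. disj_list Gs' \<and> abs_ok L I h F (foldr (combG b) Gs emptyG) (foldr (combG b) Gs' emptyG)"
proof (induction Gs arbitrary: Gs' fs)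
  case Nil then show ?case by (simp add: disj_list_def abs_ok_def emptyG_def)
next
  case (Cons G Gs)
  obtain G' Gs'' where gs': "Gs' = G' # Gs''" using Cons.prems(1) by (cases Gs') auto
  obtain f fs' where fs: "fs = f # fs'" using Cons.prems(2) by (cases fs) auto
  have h0: "abs_ok L I h f G G'" "wfG G" "wfG G'" using Cons.prems(3)[rule_format, of 0] gs' fs by auto
  have hr: "\<forall>i<length Gs. abs_ok L I h (fs'!i) (Gs!i) (Gs''!i) \<and> wfG (Gs!i) \<and> wfG (Gs''!i)"
  proof (intro allI impI)
    fix i assume "i < length Gs"
    then show "abs_ok L I h (fs'!i) (Gs!i) (Gs''!i) \<and> wfG (Gs!i) \<and> wfG (Gs''!i)"
      using Cons.prems(3)[rule_format, of "Suc i"] gs' fs by simp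
  qed
  have l1: "length Gs'' = length Gs" "length fs' = length Gs" using Cons.prems(1,2) gs' fs by simp_all
  have dl: "disj_list Gs" "\<forall>G2\<in>set Gs. fst G \<inter> fst G2 = {}" using Cons.prems(4) by simp_all
  have inj: "inj_on h (\<Union>G\<in>set Gs. fst G)" using Cons.prems(5) by (rule inj_on_subset) auto
  obtain F where F: "disj_list Gs''" "abs_ok L I h F (foldr (combG b) Gs emptyG) (foldr (combG b) Gs'' emptyG)"
    using Cons.IH[OF l1 hr dl(1) inj] by blast
  have "\<forall>G\<in>set Gs. wfG G" using hr by (metis in_set_conv_nth)
  moreover have "\<forall>G\<in>set Gs''. wfG G" using hr l1 by (metis in_set_conv_nth)
  ultimately have wr: "wfG (foldr (combG b) Gs emptyG)" "wfG (foldr (combG b) Gs'' emptyG)"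
    using foldr_comb_wf by blast+
  have dj: "fst G \<inter> fst (foldr (combG b) Gs emptyG) = {}" using dl(2) by (auto simp: foldr_comb_fst)
  have ij: "inj_on h (fst G \<union> fst (foldr (combG b) Gs emptyG))" using Cons.prems(5) by (simp add: foldr_comb_fst)
  have c: "fst G' \<inter> fst (foldr (combG b) Gs'' emptyG) = {} \<and>
    abs_ok L I h (\<lambda>x. if x \<in> fst G then f x else F x) (combG b G (foldr (combG b) Gs emptyG)) (combG b G' (foldr (combG b) Gs'' emptyG))"
    by (rule comb_abs[OF h0(1) F(2) h0(2) wr(1) h0(3) wr(2) dj ij])
  have "disj_list (G' # Gs'')" using c F(1) by (auto simp: foldr_comb_fst)
  then show ?case using c gs' by auto
qed

lemma thread_abs:
  assumes wd: "impl_well_defined T I L \<Lambda>" and t: "t \<in> {1..T}" and cm: "lib_methods \<Lambda> \<inter> lib_M L = {}"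
  shows "(r, G) \<in> sem t (translate I (lib_M L) t p) \<Longrightarrow> inj_on h (fst G) \<Longrightarrow>
     \<exists>G' f. (r, G') \<in> sem t p \<and> abs_ok L I h f G G'"
proof (induction p arbitrary: r G)
  case (PVal v)
  then show ?case by (auto simp: abs_ok_def emptyG_def)
next
  case (PBreak k v)
  then show ?case by (auto simp: abs_ok_def emptyG_def)
next
  case (PCall m vs)
  show ?case
  proof (cases "m \<in> lib_M L")
    case True
    have mem: "(r, G) \<in> sem t (I t m vs)" using PCall.prems(1) True by simp
    obtain v k where r: "r = (v, k)" by (cases r)
    have wdi: "calls_only (lib_methods \<Lambda>) (I t m vs)" "\<forall>v k G. ((v, Suc k), G) \<notin> sem t (I t m vs)"
        "\<forall>v G. ((v, 0), G) \<in> sem t (I t m vs) \<longrightarrow> fst G \<noteq> {}"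
      using wd t True unfolding impl_well_defined_def by blast+
    have k: "k = 0"
    proof (rule ccontr)
      assume "k \<noteq> 0"
      then obtain k' where "k = Suc k'" by (cases k) auto
      then show False using wdi(2) mem r by blast
    qed
    have ne: "fst G \<noteq> {}" using wdi(3) mem r k by blast
    then obtain x0 where x0: "x0 \<in> fst G" by blast
    define e' where "e' = (t, h x0, (m, vs, v))"
    have wG: "wfG G" using mem sem_wf by blast
    have meth: "\<forall>e\<in>fst G. ev_method e \<in> lib_methods \<Lambda>" using sem_thread_methods[OF mem wdi(1)] .
    have em: "ev_method e' = m" "ev_thread e' = t" "ev_inputs e' = vs" "ev_output e' = v"
      by (simp_all add: e'_def ev_method_def ev_thread_def ev_inputs_def ev_output_def)
    have s: "(r, ({e'}, {})) \<in> sem t (PCall m vs)" using r k e'_def by auto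
    have rg: "restrictG G {x \<in> fst G. (\<lambda>_. e') x = e'} = G"
      using wG by (cases G) (auto simp: restrictG_def wfG_def)
    have "abs_ok L I h (\<lambda>_. e') G ({e'}, {})"
      unfolding abs_ok_def fst_conv snd_conv
    proof (intro conjI)
      show "(\<lambda>_. e') ` fst G = {e'}" using ne by auto
      show "\<forall>e\<in>fst G. ev_method e \<notin> lib_M L" using meth cm by blast
      show "\<forall>x\<in>fst G. ev_method e' \<notin> lib_M L \<longrightarrow> e' = x" using em True by simp
      show "\<forall>x\<in>fst G. ev_method e' \<in> lib_M L \<longrightarrow> (\<exists>y\<in>fst G. e' = e' \<and> fst (snd e') = h y)"
        using x0 e'_def by auto
      show "\<forall>(x, y)\<in>snd G. (e', e') \<in> {}\<^sup>*" by simp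
      show "\<forall>e1\<in>fst G. \<forall>e2\<in>fst G. (e', e') \<in> {} \<longrightarrow> (e1, e2) \<in> snd G" by simp
      show "\<forall>e''\<in>{e'}. ev_method e'' \<in> lib_M L \<longrightarrow>
        ((ev_output e'', 0), restrictG G {x \<in> fst G. e' = e''})
          \<in> sem (ev_thread e'') (I (ev_thread e'') (ev_method e'') (ev_inputs e''))"
        using rg em mem r k by simp
    qed
    then show ?thesis using s by blast
  next
    case False
    have mem: "(r, G) \<in> sem t (PCall m vs)" using PCall.prems(1) False by simp
    then obtain v' \<iota> where g: "r = (v', 0)" "G = ({(t,\<iota>,(m,vs,v'))}, {})" by auto
    have "abs_ok L I h id G G" using False g by (simp add: abs_ok_def ev_method_def)
    then show ?thesis using mem by blast
  qed
next
  case (PLet p g)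
  from PLet.prems(1) consider (a) v G1 G2 where "((v, 0), G1) \<in> sem t (translate I (lib_M L) t p)"
     "(r, G2) \<in> sem t (translate I (lib_M L) t (g v))" "G = seqG G1 G2" "fst G1 \<inter> fst G2 = {}"
    | (b) v k where "r = (v, k)" "(r, G) \<in> sem t (translate I (lib_M L) t p)" "k \<noteq> 0" by auto
  then show ?case
  proof cases
    case a
    have i1: "inj_on h (fst G1)" using PLet.prems(2) a(3) by (auto simp: seqG_def intro: inj_on_subset)
    have i2: "inj_on h (fst G2)" using PLet.prems(2) a(3) by (auto simp: seqG_def intro: inj_on_subset)
    obtain G1' f1 where A1: "((v, 0), G1') \<in> sem t p" "abs_ok L I h f1 G1 G1'" using PLet.IH(1)[OF a(1) i1] by blast
    obtain G2' f2 where A2: "(r, G2') \<in> sem t (g v)" "abs_ok L I h f2 G2 G2'" using PLet.IH(2)[OF rangeI a(2) i2] by blast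
    have ij: "inj_on h (fst G1 \<union> fst G2)" using PLet.prems(2) a(3) by (simp add: seqG_def)
    have c: "fst G1' \<inter> fst G2' = {} \<and> abs_ok L I h (\<lambda>x. if x \<in> fst G1 then f1 x else f2 x) (combG True G1 G2) (combG True G1' G2')"
      by (rule comb_abs[OF A1(2) A2(2) sem_wf[OF a(1)] sem_wf[OF a(2)] sem_wf[OF A1(1)] sem_wf[OF A2(1)] a(4) ij])
    have "(r, seqG G1' G2') \<in> {(r, seqG G1 G2) | v G1 r G2. ((v,0),G1) \<in> sem t p \<and> (r,G2) \<in> sem t (g v)
                                    \<and> fst G1 \<inter> fst G2 = {}}" using A1(1) A2(1) c by blast
    then have "(r, seqG G1' G2') \<in> sem t (PLet p g)" unfolding sem.simps by (rule UnI1)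
    moreover have "abs_ok L I h (\<lambda>x. if x \<in> fst G1 then f1 x else f2 x) G (seqG G1' G2')"
      using c a(3) by (simp only: seqG_comb)
    ultimately show ?thesis by blast
  next
    case b
    obtain G' f where g': "(r, G') \<in> sem t p" "abs_ok L I h f G G'" using PLet.IH(1)[OF b(2) PLet.prems(2)] by blast
    have "(r, G') \<in> {((v,k),G1) | v k G1. ((v,k),G1) \<in> sem t p \<and> k \<noteq> 0}" using g'(1) b(1,3) by blast
    then have "(r, G') \<in> sem t (PLet p g)" unfolding sem.simps by (rule UnI2)
    then show ?thesis using g'(2) by blast
  qed
next
  case (PLoop p)
  from PLoop.prems(1) obtain v k Gs where l: "r = (v,k)" "G = seq_list Gs" "Gs \<noteq> []" "disj_list Gs"
    "\<forall>i < length Gs - 1. \<exists>u. ((u,0), Gs!i) \<in> sem t (translate I (lib_M L) t p)"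
    "((v, Suc k), last Gs) \<in> sem t (translate I (lib_M L) t p)" by auto
  define n where "n = length Gs"
  have fG: "fst G = (\<Union>G\<in>set Gs. fst G)" using l(2) foldr_comb_fst by (simp add: seq_list_def seqG_comb)
  have ex: "\<forall>i. \<exists>q. i < n \<longrightarrow> (abs_ok L I h (snd q) (Gs!i) (fst q) \<and> wfG (Gs!i) \<and> wfG (fst q) \<and>
      (i < n - 1 \<longrightarrow> (\<exists>u. ((u,0), fst q) \<in> sem t p)) \<and> (i = n - 1 \<longrightarrow> ((v, Suc k), fst q) \<in> sem t p))"
  proof
    fix i
    show "\<exists>q. i < n \<longrightarrow> (abs_ok L I h (snd q) (Gs!i) (fst q) \<and> wfG (Gs!i) \<and> wfG (fst q) \<and>
      (i < n - 1 \<longrightarrow> (\<exists>u. ((u,0), fst q) \<in> sem t p)) \<and> (i = n - 1 \<longrightarrow> ((v, Suc k), fst q) \<in> sem t p))"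
    proof (cases "i < n")
      case False then show ?thesis by blast
    next
      case True
      have "fst (Gs!i) \<subseteq> fst G" using fG True n_def by auto
      then have inj: "inj_on h (fst (Gs!i))" using PLoop.prems(2) by (rule inj_on_subset[rotated])
      show ?thesis
      proof (cases "i < n - 1")
        case True
        then obtain u where u: "((u,0), Gs!i) \<in> sem t (translate I (lib_M L) t p)" using l(5) n_def by blast
        obtain G' f where g': "((u,0), G') \<in> sem t p" "abs_ok L I h f (Gs!i) G'" using PLoop.IH[OF u inj] by blast
        then show ?thesis using True sem_wf[OF u] sem_wf[OF g'(1)] by (intro exI[of _ "(G', f)"]) auto
      next
        case False
        then have ii: "i = n - 1" using \<open>i < n\<close> by simp
        then have u: "((v, Suc k), Gs!i) \<in> sem t (translate I (lib_M L) t p)" using l(3,6) n_def by (simp add: last_conv_nth)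
        obtain G' f where g': "((v, Suc k), G') \<in> sem t p" "abs_ok L I h f (Gs!i) G'" using PLoop.IH[OF u inj] by blast
        then show ?thesis using ii sem_wf[OF u] sem_wf[OF g'(1)] by (intro exI[of _ "(G', f)"]) auto
      qed
    qed
  qed
  obtain GF where GF: "\<forall>i. i < n \<longrightarrow> (abs_ok L I h (snd (GF i)) (Gs!i) (fst (GF i)) \<and> wfG (Gs!i) \<and> wfG (fst (GF i)) \<and>
      (i < n - 1 \<longrightarrow> (\<exists>u. ((u,0), fst (GF i)) \<in> sem t p)) \<and> (i = n - 1 \<longrightarrow> ((v, Suc k), fst (GF i)) \<in> sem t p))"
    using choice[OF ex] by blast
  define Gs' where "Gs' = map (\<lambda>i. fst (GF i)) [0..<n]"
  define fs where "fs = map (\<lambda>i. snd (GF i)) [0..<n]"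
  have len: "length Gs' = length Gs" "length fs = length Gs" by (simp_all add: Gs'_def fs_def n_def)
  have all: "\<forall>i<length Gs. abs_ok L I h (fs!i) (Gs!i) (Gs'!i) \<and> wfG (Gs!i) \<and> wfG (Gs'!i)"
    using GF by (simp add: Gs'_def fs_def n_def)
  have ij: "inj_on h (\<Union>G\<in>set Gs. fst G)" using PLoop.prems(2) fG by simp
  obtain F where F: "disj_list Gs'" "abs_ok L I h F (foldr (combG True) Gs emptyG) (foldr (combG True) Gs' emptyG)"
    using list_comb[OF len all l(4) ij] by blast
  have s1: "Gs' \<noteq> []" using l(3) len by auto
  have s2: "\<forall>i < length Gs' - 1. \<exists>u. ((u,0), Gs'!i) \<in> sem t p" using GF by (simp add: Gs'_def)
  have s3: "((v, Suc k), last Gs') \<in> sem t p"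
  proof -
    have "last Gs' = Gs' ! (n - 1)" using s1 len n_def by (simp add: last_conv_nth)
    moreover have "n - 1 < n" using l(3) n_def by simp
    ultimately show ?thesis using GF by (simp add: Gs'_def)
  qed
  have "(r, seq_list Gs') \<in> sem t (PLoop p)" using s1 s2 s3 F(1) l(1) by auto
  moreover have "abs_ok L I h F G (seq_list Gs')" using F(2) l(2) by (simp add: seq_list_def seqG_comb)
  ultimately show ?case by blast
qed


theorem mainTheorem1:
  fixes T :: nat and Loc :: "'v set" and to :: "('s \<times> 's) set"
    and L :: "('v,'m,'s) library" and \<Lambda> :: "('v,'m,'s) library set"
    and I :: "('v,'m) impl" and ps :: "('v,'m) prog list"
    and vs :: "'v list" and G :: "('v,'m) pexec"
  assumes "is_library T Loc to L"
    and "\<forall>L'\<in>\<Lambda>. is_library T Loc to L'"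
    and "\<forall>L1\<in>\<Lambda> \<union> {L}. \<forall>L2\<in>\<Lambda> \<union> {L}. L1 \<noteq> L2 \<longrightarrow> compatible L1 L2"
    and "L \<notin> \<Lambda>"
    and "impl_well_defined T I L \<Lambda>"
    and "length ps = T"
    and "\<forall>p\<in>set ps. valid_prog p \<and> calls_only (lib_methods (\<Lambda> \<union> {L})) p"
    and "(vs, G) \<in> conc_sem (translate_conc I (lib_M L) ps)"
  shows "\<exists>G' f. (vs, G') \<in> conc_sem ps \<and> wide_abstraction L I f G G'"
proof -
  have cm: "lib_methods \<Lambda> \<inter> lib_M L = {}"
  proof -
    have "\<forall>L'\<in>\<Lambda>. lib_M L' \<inter> lib_M L = {}"
    proof
      fix L' assume "L' \<in> \<Lambda>"
      then have "L' \<noteq> L" using assms(4) by blast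
      then show "lib_M L' \<inter> lib_M L = {}" using assms(3) \<open>L' \<in> \<Lambda>\<close> unfolding compatible_def by blast
    qed
    then show ?thesis unfolding lib_methods_def by blast
  qed
  obtain Gs where c: "G = par_list Gs" "length vs = T" "length Gs = T" "disj_list Gs"
    "\<forall>i<T. ((vs!i, 0), Gs!i) \<in> sem (Suc i) (translate I (lib_M L) (Suc i) (ps!i))"
    using assms(8) assms(6) unfolding conc_sem_def translate_conc_def by auto
  have fG: "fst G = (\<Union>G\<in>set Gs. fst G)" using c(1) foldr_comb_fst by (simp add: par_list_def parG_comb)
  have "\<forall>G\<in>set Gs. wfG G" using c(3,5) sem_wf by (metis in_set_conv_nth)
  then have "finite (fst G)" using fG by (auto simp: wfG_def)
  then obtain h :: "('v,'m) event \<Rightarrow> nat" where h: "inj_on h (fst G)"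
    using finite_imp_inj_to_nat_seg by blast
  have ex: "\<forall>i. \<exists>q. i < T \<longrightarrow> (abs_ok L I h (snd q) (Gs!i) (fst q) \<and> wfG (Gs!i) \<and> wfG (fst q) \<and>
      ((vs!i, 0), fst q) \<in> sem (Suc i) (ps!i))"
  proof
    fix i
    show "\<exists>q. i < T \<longrightarrow> (abs_ok L I h (snd q) (Gs!i) (fst q) \<and> wfG (Gs!i) \<and> wfG (fst q) \<and>
      ((vs!i, 0), fst q) \<in> sem (Suc i) (ps!i))"
    proof (cases "i < T")
      case False then show ?thesis by blast
    next
      case True
      have "fst (Gs!i) \<subseteq> fst G" using fG True c(3) by auto
      then have inj: "inj_on h (fst (Gs!i))" using h by (rule inj_on_subset[rotated])
      have t: "Suc i \<in> {1..T}" using True by simp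
      have m: "((vs!i, 0), Gs!i) \<in> sem (Suc i) (translate I (lib_M L) (Suc i) (ps!i))" using c(5) True by blast
      obtain G' f where g': "((vs!i, 0), G') \<in> sem (Suc i) (ps!i)" "abs_ok L I h f (Gs!i) G'"
        using thread_abs[OF assms(5) t cm m inj] by blast
      then show ?thesis using sem_wf[OF m] sem_wf[OF g'(1)] by (intro exI[of _ "(G', f)"]) auto
    qed
  qed
  obtain GF where GF: "\<forall>i. i < T \<longrightarrow> (abs_ok L I h (snd (GF i)) (Gs!i) (fst (GF i)) \<and> wfG (Gs!i) \<and> wfG (fst (GF i)) \<and>
      ((vs!i, 0), fst (GF i)) \<in> sem (Suc i) (ps!i))"
    using choice[OF ex] by blast
  define Gs' where "Gs' = map (\<lambda>i. fst (GF i)) [0..<T]"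
  define fs where "fs = map (\<lambda>i. snd (GF i)) [0..<T]"
  have len: "length Gs' = length Gs" "length fs = length Gs" by (simp_all add: Gs'_def fs_def c(3))
  have all: "\<forall>i<length Gs. abs_ok L I h (fs!i) (Gs!i) (Gs'!i) \<and> wfG (Gs!i) \<and> wfG (Gs'!i)"
    using GF by (simp add: Gs'_def fs_def c(3))
  have ij: "inj_on h (\<Union>G\<in>set Gs. fst G)" using h fG by simp
  obtain F where F: "disj_list Gs'" "abs_ok L I h F (foldr (combG False) Gs emptyG) (foldr (combG False) Gs' emptyG)"
    using list_comb[OF len all c(4) ij] by blast
  have "(vs, par_list Gs') \<in> conc_sem ps"
  proof -
    have "\<forall>i<length ps. ((vs!i, 0), Gs'!i) \<in> sem (Suc i) (ps!i)" using GF assms(6) by (simp add: Gs'_def)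
    moreover have "length vs = length ps" "length Gs' = length ps" using c(2) assms(6) by (simp_all add: Gs'_def)
    ultimately show ?thesis using F(1) unfolding conc_sem_def by blast
  qed
  moreover have "abs_ok L I h F G (par_list Gs')" using F(2) c(1) by (simp add: par_list_def parG_comb)
  then have "wide_abstraction L I F G (par_list Gs')" unfolding abs_ok_def wide_abstraction_def by blast
  ultimately show ?thesis by blast
qed

end
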